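(* Assume the Setup below. For $n\ge1$ let $\Psi(n)=\Psi_{\theta_0}(n)$, $\dot\Psi(n)=\frac{d}{d\theta}\Psi_\theta(n)|_{\theta_0}$ and $$M^{(n)}=|\Psi(n)\rangle\langle\dot\Psi(n)|-|\dot\Psi(n)\rangle\langle\Psi(n)|$$ on $\mathcal H_0\otimes\mathcal H_1\otimes\cdots\otimes\mathcal H_n$. Let $1\le j\le n$ and let $e^{[1]},\dots,e^{[j-1]}\in\mathbb C^k$ be unit vectors with $|\langle e^{[l]}|\chi\rangle|^2=1/k$ for all $l$. Define $$M^{(n)}(\underline{j-1})=\big\langle e^{[1]}\otimes\cdots\otimes e^{[j-1]}\big|M^{(n)}\big|e^{[1]}\otimes\cdots\otimes e^{[j-1]}\big\rangle$$ (partial matrix element over $\mathcal H_1,\dots,\mathcal H_{j-1}$, an operator on $\mathcal H_0\otimes\mathcal H_j\otimes\cdots\otimes\mathcal H_n$) and $M^{(n)}_j(\underline{j-1})=\mathrm{Tr}_{0,j+1,\dots,n}M^{(n)}(\underline{j-1})$, an operator on $\mathcal H_j\cong\mathbb C^k$. Then $$M^{(n)}_j(\underline{j-1})=M^{(j)}_j(\underline{j-1}).$$ Consequently, in the sequential adaptive procedure in which the basis $\{e^{[j]}_i\}_{i=1}^k$ of unit $j$ is chosen (given the previously chosen bases and outcomes $i_1,\dots,i_{j-1}$, with $e^{[l]}=e^{[l]}_{i_l}$) to satisfy $\langle e^{[j]}_i|M^{(n)}_j(\underline{j-1})|e^{[j]}_i\rangle=0$ and $|\langle e^{[j]}_i|\chi\rangle|^2=1/k$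 for all $i$, the constraints determining the bases of units $1,\dots,j$ are the same for every output length $n\ge j$, so these bases can be chosen independently of $n$.
   Context: Setup: Let $D,k\ge2$ be integers, $\mathcal H_0=\mathbb C^D$ (the system, e.g. system plus absorber) and $\mathcal H_1,\dots,\mathcal H_n$ copies of $\mathbb C^k$ (noise units). Let $\chi\in\mathbb C^k$ be a unit vector and $P_\chi=|\chi\rangle\langle\chi|$. Let $\theta\mapsto W_\theta$ be a smooth family of unitaries on $\mathbb C^D\otimes\mathbb C^k$, and let $W^{(j)}_\theta$ denote $W_\theta$ acting on $\mathcal H_0\otimes\mathcal H_j$ (identity on the other factors). Fix $\theta_0$ and write $W=W_{\theta_0}$, $\dot W=\frac{dW_\theta}{d\theta}|_{\theta_0}$. Assume there is a unit vector $\psi\in\mathbb C^D$ with $W(\psi\otimes\chi)=\psi\otimes\chi$ and $\langle\psi\otimes\chi|\dot W|\psi\otimes\chi\rangle=0$. Define $\Psi_\theta(n)=W^{(n)}_\theta\cdots W^{(1)}_\theta(\psi\otimes\chi^{\otimes n})\in\mathcal H_0\otimes\mathcal H_1\otimes\cdots\otimes\mathcal H_n$. $\mathrm{Tr}_{0,j+1,\dots,n}$ denotes partial trace over $\mathcal H_0,\mathcal H_{j+1},\dots,\mathcal H_n$. *)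

theory Defs
  imports "HOL-Analysis.Analysis"
begin

text \<open>Basis of H_0 = C^D is indexed by a < D, basis of each noise unit C^k by i < k.
  A basis index of H_0 (x) H_1 (x) ... (x) H_n is a pair (a, xs) with a < D and xs a list of
  length n with entries < k; xs ! (j-1) is the index of the factor H_j.
  Vectors are functions nat \<times> nat list \<Rightarrow> complex, operators are kernels (matrices)
  indexed by two such basis indices.  A unitary on C^D (x) C^k is a matrix
  W :: (nat \<times> nat) \<Rightarrow> (nat \<times> nat) \<Rightarrow> complex, indices (system, unit).\<close>

definition cube :: "nat \<Rightarrow> nat \<Rightarrow> nat list set" where
  "cube k m = {xs. length xs = m \<and> set xs \<subseteq> {..<k}}"

definition pairs :: "nat \<Rightarrow> nat \<Rightarrow> (nat \<times> nat) set" where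
  "pairs D k = {..<D} \<times> {..<k}"

definition unitary_mat :: "nat \<Rightarrow> nat \<Rightarrow> ((nat \<times> nat) \<Rightarrow> (nat \<times> nat) \<Rightarrow> complex) \<Rightarrow> bool" where
  "unitary_mat D k U \<longleftrightarrow>
     (\<forall>p\<in>pairs D k. \<forall>q\<in>pairs D k.
        (\<Sum>r\<in>pairs D k. cnj (U r p) * U r q) = (if p = q then 1 else 0)) \<and>
     (\<forall>p\<in>pairs D k. \<forall>q\<in>pairs D k.
        (\<Sum>r\<in>pairs D k. U p r * cnj (U q r)) = (if p = q then 1 else 0))"

definition vderiv :: "(real \<Rightarrow> complex) \<Rightarrow> real \<Rightarrow> complex" where
  "vderiv g = (\<lambda>t. vector_derivative g (at t))"

definition smooth_cfun :: "(real \<Rightarrow> complex) \<Rightarrow> bool" where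
  "smooth_cfun f \<longleftrightarrow> (\<forall>m t. (vderiv ^^ m) f differentiable (at t))"

text \<open>W^{(j)}: W acting on H_0 (x) H_j (identity elsewhere), j \<ge> 1.\<close>
definition applyW :: "nat \<Rightarrow> nat \<Rightarrow> ((nat \<times> nat) \<Rightarrow> (nat \<times> nat) \<Rightarrow> complex) \<Rightarrow> nat
     \<Rightarrow> (nat \<times> nat list \<Rightarrow> complex) \<Rightarrow> (nat \<times> nat list \<Rightarrow> complex)" where
  "applyW D k U j v = (\<lambda>(a, xs).
     \<Sum>(b, c)\<in>pairs D k. U (a, xs ! (j - 1)) (b, c) * v (b, xs[j - 1 := c]))"

definition init_state :: "(nat \<Rightarrow> complex) \<Rightarrow> (nat \<Rightarrow> complex) \<Rightarrow> nat \<times> nat list \<Rightarrow> complex" where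
  "init_state psi chi = (\<lambda>(a, xs). psi a * (\<Prod>i<length xs. chi (xs ! i)))"

fun steps :: "nat \<Rightarrow> nat \<Rightarrow> ((nat \<times> nat) \<Rightarrow> (nat \<times> nat) \<Rightarrow> complex) \<Rightarrow> nat
     \<Rightarrow> (nat \<times> nat list \<Rightarrow> complex) \<Rightarrow> (nat \<times> nat list \<Rightarrow> complex)" where
  "steps D k U 0 v = v"
| "steps D k U (Suc m) v = applyW D k U (Suc m) (steps D k U m v)"

definition Psi :: "nat \<Rightarrow> nat \<Rightarrow> (real \<Rightarrow> (nat \<times> nat) \<Rightarrow> (nat \<times> nat) \<Rightarrow> complex)
     \<Rightarrow> (nat \<Rightarrow> complex) \<Rightarrow> (nat \<Rightarrow> complex) \<Rightarrow> real \<Rightarrow> nat \<Rightarrow> nat \<times> nat list \<Rightarrow> complex" where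
  "Psi D k W psi chi \<theta> n = steps D k (W \<theta>) n (init_state psi chi)"

definition dPsi :: "nat \<Rightarrow> nat \<Rightarrow> (real \<Rightarrow> (nat \<times> nat) \<Rightarrow> (nat \<times> nat) \<Rightarrow> complex)
     \<Rightarrow> (nat \<Rightarrow> complex) \<Rightarrow> (nat \<Rightarrow> complex) \<Rightarrow> real \<Rightarrow> nat \<Rightarrow> nat \<times> nat list \<Rightarrow> complex" where
  "dPsi D k W psi chi \<theta>0 n = (\<lambda>x. vector_derivative (\<lambda>\<theta>. Psi D k W psi chi \<theta> n x) (at \<theta>0))"

definition Mop :: "nat \<Rightarrow> nat \<Rightarrow> (real \<Rightarrow> (nat \<times> nat) \<Rightarrow> (nat \<times> nat) \<Rightarrow> complex)
     \<Rightarrow> (nat \<Rightarrow> complex) \<Rightarrow> (nat \<Rightarrow> complex) \<Rightarrow> real \<Rightarrow> nat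
     \<Rightarrow> nat \<times> nat list \<Rightarrow> nat \<times> nat list \<Rightarrow> complex" where
  "Mop D k W psi chi \<theta>0 n = (\<lambda>x y.
     Psi D k W psi chi \<theta>0 n x * cnj (dPsi D k W psi chi \<theta>0 n y)
     - dPsi D k W psi chi \<theta>0 n x * cnj (Psi D k W psi chi \<theta>0 n y))"

definition evec :: "(nat \<Rightarrow> nat \<Rightarrow> complex) \<Rightarrow> nat list \<Rightarrow> complex" where
  "evec e us = (\<Prod>l<length us. e (Suc l) (us ! l))"

text \<open>Partial matrix element <e^{[1]}..e^{[j-1]}| A |e^{[1]}..e^{[j-1]}> over H_1..H_{j-1},
  giving an operator on H_0 (x) H_j (x) ... (x) H_n (basis index (a, ys), length ys = n-j+1).\<close>
definition partial_elem :: "nat \<Rightarrow> nat \<Rightarrow> (nat \<Rightarrow> nat \<Rightarrow> complex)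
     \<Rightarrow> (nat \<times> nat list \<Rightarrow> nat \<times> nat list \<Rightarrow> complex)
     \<Rightarrow> nat \<times> nat list \<Rightarrow> nat \<times> nat list \<Rightarrow> complex" where
  "partial_elem k m e A = (\<lambda>(a, ys) (b, zs).
     \<Sum>us\<in>cube k m. \<Sum>vs\<in>cube k m. cnj (evec e us) * A (a, us @ ys) (b, vs @ zs) * evec e vs)"

text \<open>Tr_{0, j+1..n} of an operator on H_0 (x) H_j (x) ... (x) H_n; r = n - j traced units.\<close>
definition ptrace_first :: "nat \<Rightarrow> nat \<Rightarrow> nat
     \<Rightarrow> (nat \<times> nat list \<Rightarrow> nat \<times> nat list \<Rightarrow> complex) \<Rightarrow> nat \<Rightarrow> nat \<Rightarrow> complex" where
  "ptrace_first D k r B = (\<lambda>c c'.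
     \<Sum>a<D. \<Sum>ws\<in>cube k r. B (a, c # ws) (a, c' # ws))"

definition Mj :: "nat \<Rightarrow> nat \<Rightarrow> (real \<Rightarrow> (nat \<times> nat) \<Rightarrow> (nat \<times> nat) \<Rightarrow> complex)
     \<Rightarrow> (nat \<Rightarrow> complex) \<Rightarrow> (nat \<Rightarrow> complex) \<Rightarrow> real \<Rightarrow> (nat \<Rightarrow> nat \<Rightarrow> complex)
     \<Rightarrow> nat \<Rightarrow> nat \<Rightarrow> nat \<Rightarrow> nat \<Rightarrow> complex" where
  "Mj D k W psi chi \<theta>0 e n j = ptrace_first D k (n - j)
     (partial_elem k (j - 1) e (Mop D k W psi chi \<theta>0 n))"

end

theory Submission
  imports Defs
begin


fun dst :: "nat \<Rightarrow> nat \<Rightarrow> (real \<Rightarrow> (nat \<times> nat) \<Rightarrow> (nat \<times> nat) \<Rightarrow> complex) \<Rightarrow> real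
   \<Rightarrow> (nat \<Rightarrow> complex) \<Rightarrow> (nat \<Rightarrow> complex) \<Rightarrow> nat \<Rightarrow> nat \<times> nat list \<Rightarrow> complex" where
  "dst D k W t0 psi chi 0 = (\<lambda>x. 0)"
| "dst D k W t0 psi chi (Suc m) = (\<lambda>(a,xs). \<Sum>(b,c)\<in>pairs D k.
      W t0 (a, xs!m) (b,c) * dst D k W t0 psi chi m (b, xs[m:=c])
    + vector_derivative (\<lambda>\<theta>. W \<theta> (a, xs!m) (b,c)) (at t0) * steps D k (W t0) m (init_state psi chi) (b, xs[m:=c]))"

lemma dst_deriv:
  assumes Wd: "\<And>p q. p \<in> pairs D k \<Longrightarrow> q \<in> pairs D k \<Longrightarrow> (\<lambda>\<theta>. W \<theta> p q) differentiable (at t0)"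
  shows "a < D \<Longrightarrow> set xs \<subseteq> {..<k} \<Longrightarrow> m \<le> length xs \<Longrightarrow>
    ((\<lambda>\<theta>. steps D k (W \<theta>) m (init_state psi chi) (a,xs)) has_vector_derivative dst D k W t0 psi chi m (a,xs)) (at t0)"
proof (induction m arbitrary: a xs)
  case 0
  then show ?case by simp
next
  case (Suc m)
  show ?case
    unfolding steps.simps dst.simps applyW_def
  proof (simp only: case_prod_conv diff_Suc_1, rule has_vector_derivative_sum, goal_cases)
    case (1 bc)
    obtain b c where bc: "bc = (b,c)" by fastforce
    with 1 have b: "b < D" and c: "c < k" by (auto simp: pairs_def)
    have "xs!m \<in> set xs" using Suc.prems by (intro nth_mem) simp
    from subsetD[OF Suc.prems(2) this] have p1: "(a, xs!m) \<in> pairs D k" using Suc.prems b c by (auto simp: pairs_def)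
    have p2: "(b,c) \<in> pairs D k" using b c by (auto simp: pairs_def)
    have ih: "((\<lambda>\<theta>. steps D k (W \<theta>) m (init_state psi chi) (b, xs[m:=c])) has_vector_derivative dst D k W t0 psi chi m (b, xs[m:=c])) (at t0)"
      apply (rule Suc.IH)
      using b c Suc.prems by (auto dest: subsetD[OF set_update_subset_insert])
    have wd: "((\<lambda>\<theta>. W \<theta> (a, xs!m) (b,c)) has_vector_derivative vector_derivative (\<lambda>\<theta>. W \<theta> (a, xs!m) (b,c)) (at t0)) (at t0)"
      using Wd[OF p1 p2] vector_derivative_works by blast
    show ?case unfolding bc case_prod_conv
      using has_vector_derivative_mult[OF wd ih] .
  qed
qed


lemma prodc: "(\<Prod>i<length xs. f (xs!i)) = prod_list (map f xs)"
proof (induction xs)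
  case Nil then show ?case by simp
next
  case (Cons x xs) then show ?case by (simp add: prod.lessThan_Suc_shift del: prod.lessThan_Suc)
qed

lemma init_pl: "init_state psi chi (a,xs) = psi a * prod_list (map chi xs)"
  by (simp add: init_state_def prodc)

lemma pl_upd:
  fixes f :: "'a \<Rightarrow> 'b::comm_monoid_mult"
  assumes "m < length xs"
  shows "prod_list (map f (xs[m:=c])) = f c * (prod_list (map f (take m xs)) * prod_list (map f (drop (Suc m) xs)))"
    and "prod_list (map f xs) = f (xs!m) * (prod_list (map f (take m xs)) * prod_list (map f (drop (Suc m) xs)))"
proof -
  have e1: "xs[m:=c] = take m xs @ c # drop (Suc m) xs" using assms by (rule upd_conv_take_nth_drop)
  have e2: "xs = take m xs @ xs!m # drop (Suc m) xs" using assms by (simp add: id_take_nth_drop)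
  show "prod_list (map f (xs[m:=c])) = f c * (prod_list (map f (take m xs)) * prod_list (map f (drop (Suc m) xs)))"
    by (subst e1) (simp only: map_append list.map prod_list.append prod_list.Cons mult_ac)
  show "prod_list (map f xs) = f (xs!m) * (prod_list (map f (take m xs)) * prod_list (map f (drop (Suc m) xs)))"
    by (subst e2) (simp add: ac_simps del: append_take_drop_id)
qed

lemma steps_fixed:
  assumes fixed: "\<And>a i. a < D \<Longrightarrow> i < k \<Longrightarrow>
        (\<Sum>(b, c)\<in>pairs D k. W0 (a, i) (b, c) * (psi b * chi c)) = psi a * chi i"
  shows "a < D \<Longrightarrow> set xs \<subseteq> {..<k} \<Longrightarrow> m \<le> length xs \<Longrightarrow>
    steps D k W0 m (init_state psi chi) (a,xs) = init_state psi chi (a,xs)"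
proof (induction m arbitrary: a xs)
  case 0 then show ?case by simp
next
  case (Suc m)
  define R where "R = prod_list (map chi (take m xs)) * prod_list (map chi (drop (Suc m) xs))"
  have ml: "m < length xs" using Suc.prems by simp
  have "xs!m \<in> set xs" using ml by (rule nth_mem)
  from subsetD[OF Suc.prems(2) this] have xm: "xs!m < k" by simp
  have "steps D k W0 (Suc m) (init_state psi chi) (a,xs)
     = (\<Sum>(b,c)\<in>pairs D k. W0 (a, xs!m) (b,c) * steps D k W0 m (init_state psi chi) (b, xs[m:=c]))"
    by (simp add: applyW_def)
  also have "\<dots> = (\<Sum>(b,c)\<in>pairs D k. W0 (a, xs!m) (b,c) * (psi b * chi c) * R)"
  proof (rule sum.cong[OF refl], clarify)
    fix b c assume "(b,c) \<in> pairs D k"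
    then have b: "b < D" and c: "c < k" by (auto simp: pairs_def)
    have "steps D k W0 m (init_state psi chi) (b, xs[m:=c]) = init_state psi chi (b, xs[m:=c])"
      apply (rule Suc.IH)
      using b c Suc.prems by (auto dest: subsetD[OF set_update_subset_insert])
    also have "\<dots> = psi b * chi c * R" unfolding init_pl R_def pl_upd(1)[OF ml] by simp
    finally show "W0 (a, xs!m) (b,c) * steps D k W0 m (init_state psi chi) (b, xs[m:=c]) = W0 (a, xs!m) (b,c) * (psi b * chi c) * R"
      by simp
  qed
  also have "\<dots> = (\<Sum>(b,c)\<in>pairs D k. W0 (a, xs!m) (b,c) * (psi b * chi c)) * R"
    by (simp add: sum_distrib_right case_prod_unfold)
  also have "\<dots> = psi a * chi (xs!m) * R" using fixed[OF Suc.prems(1) xm] by simp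
  also have "\<dots> = init_state psi chi (a,xs)" unfolding init_pl R_def pl_upd(2)[OF ml] by simp
  finally show ?case .
qed

lemma steps_app: "m \<le> length zs \<Longrightarrow>
   steps D k W0 m (init_state psi chi) (b, zs@ys) = steps D k W0 m (init_state psi chi) (b,zs) * prod_list (map chi ys)"
proof (induction m arbitrary: b zs)
  case 0 then show ?case by (simp add: init_pl)
next
  case (Suc m)
  then have ml: "m < length zs" by simp
  show ?case using ml Suc.IH
    by (simp add: applyW_def nth_append list_update_append sum_distrib_right case_prod_unfold mult.assoc)
qed

lemma dst_app: "m \<le> length zs \<Longrightarrow>
   dst D k W t0 psi chi m (b, zs@ys) = dst D k W t0 psi chi m (b,zs) * prod_list (map chi ys)"
proof (induction m arbitrary: b zs)
  case 0 then show ?case by simp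
next
  case (Suc m)
  then have ml: "m < length zs" by simp
  show ?case using ml Suc.IH steps_app[of m]
    by (simp add: nth_append list_update_append sum_distrib_right case_prod_unfold algebra_simps sum_distrib_left)
qed


lemma finite_pairs[simp]: "finite (pairs D k)" by (simp add: pairs_def)

lemma adj_fixed:
  fixes W0 :: "(nat \<times> nat) \<Rightarrow> (nat \<times> nat) \<Rightarrow> complex" and u :: "nat \<times> nat \<Rightarrow> complex"
  assumes U: "unitary_mat D k W0"
    and fx: "\<And>p. p \<in> pairs D k \<Longrightarrow> (\<Sum>r\<in>pairs D k. W0 p r * u r) = u p"
    and q: "q \<in> pairs D k"
  shows "(\<Sum>p\<in>pairs D k. cnj (u p) * W0 p q) = cnj (u q)"
proof -
  have "(\<Sum>p\<in>pairs D k. cnj (u p) * W0 p q) = (\<Sum>p\<in>pairs D k. cnj (\<Sum>r\<in>pairs D k. W0 p r * u r) * W0 p q)"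
    using fx by simp
  also have "\<dots> = (\<Sum>p\<in>pairs D k. \<Sum>r\<in>pairs D k. cnj (u r) * (cnj (W0 p r) * W0 p q))"
    by (simp add: sum_distrib_left sum_distrib_right mult_ac)
  also have "\<dots> = (\<Sum>r\<in>pairs D k. cnj (u r) * (\<Sum>p\<in>pairs D k. cnj (W0 p r) * W0 p q))"
    by (subst sum.swap) (simp add: sum_distrib_left)
  also have "\<dots> = (\<Sum>r\<in>pairs D k. if r = q then cnj (u r) else 0)"
    using U q unfolding unitary_mat_def by (intro sum.cong refl) simp
  also have "\<dots> = cnj (u q)" using q by simp
  finally show ?thesis .
qed

lemma keyK:
  fixes W :: "real \<Rightarrow> (nat \<times> nat) \<Rightarrow> (nat \<times> nat) \<Rightarrow> complex"
  assumes U: "unitary_mat D k (W t0)"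
    and fixed: "\<And>a i. a < D \<Longrightarrow> i < k \<Longrightarrow>
        (\<Sum>(b, c)\<in>pairs D k. W t0 (a, i) (b, c) * (psi b * chi c)) = psi a * chi i"
    and dW_zero: "(\<Sum>(a, i)\<in>pairs D k. \<Sum>(b, c)\<in>pairs D k.
        cnj (psi a * chi i) * vector_derivative (\<lambda>\<theta>. W \<theta> (a, i) (b, c)) (at t0)
        * (psi b * chi c)) = 0"
    and chi_unit: "(\<Sum>i<k. (cmod (chi i))\<^sup>2) = 1"
    and zs: "set zs \<subseteq> {..<k}"
  shows "(\<Sum>a<D. \<Sum>w<k. cnj (psi a * chi w) * dst D k W t0 psi chi (Suc (length zs)) (a, zs@[w]))
       = (\<Sum>a<D. cnj (psi a) * dst D k W t0 psi chi (length zs) (a, zs))"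
proof -
  define N where "N = length zs"
  define u where "u = (\<lambda>p. psi (fst p) * chi (snd p))"
  define dW where "dW = (\<lambda>p q. vector_derivative (\<lambda>\<theta>. W \<theta> p q) (at t0))"
  define X where "X = (\<lambda>q. dst D k W t0 psi chi N (fst q, zs) * chi (snd q))"
  define P where "P = prod_list (map chi zs)"
  have fx: "\<And>p. p \<in> pairs D k \<Longrightarrow> (\<Sum>r\<in>pairs D k. W t0 p r * u r) = u p"
    using fixed unfolding u_def pairs_def by (auto simp: case_prod_unfold)
  have adj: "\<And>q. q \<in> pairs D k \<Longrightarrow> (\<Sum>p\<in>pairs D k. cnj (u p) * W t0 p q) = cnj (u q)"
    using adj_fixed[OF U fx] by blast
  have dz: "(\<Sum>p\<in>pairs D k. \<Sum>q\<in>pairs D k. cnj (u p) * dW p q * u q) = 0"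
    using dW_zero unfolding u_def dW_def by (simp add: case_prod_unfold)
  have st: "steps D k (W t0) N (init_state psi chi) (b, zs @ [c]) = u (b,c) * P" if "b < D" "c < k" for b c
  proof -
    have "steps D k (W t0) N (init_state psi chi) (b, zs @ [c]) = init_state psi chi (b, zs @ [c])"
      by (rule steps_fixed[OF fixed]) (use that zs N_def in auto)
    then show ?thesis by (simp add: init_pl u_def P_def mult_ac)
  qed
  have dexp: "dst D k W t0 psi chi (Suc N) (a, zs@[w]) = (\<Sum>q\<in>pairs D k. W t0 (a,w) q * X q + dW (a,w) q * (u q * P))" for a w
  proof -
    have e1: "(zs@[w])!N = w" and e2: "\<And>c. (zs@[w])[N:=c] = zs@[c]" by (simp_all add: N_def)
    have da: "\<And>b c. dst D k W t0 psi chi N (b, zs@[c]) = dst D k W t0 psi chi N (b, zs) * chi c"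
      using dst_app[of N zs] by (simp add: N_def)
    show ?thesis unfolding dst.simps
      by (auto simp: e1 e2 X_def dW_def case_prod_unfold da st pairs_def intro!: sum.cong)
  qed
  have "(\<Sum>a<D. \<Sum>w<k. cnj (psi a * chi w) * dst D k W t0 psi chi (Suc N) (a, zs@[w]))
      = (\<Sum>p\<in>pairs D k. cnj (u p) * dst D k W t0 psi chi (Suc N) (fst p, zs@[snd p]))"
    unfolding pairs_def u_def by (simp add: sum.cartesian_product case_prod_unfold)
  also have "\<dots> = (\<Sum>p\<in>pairs D k. \<Sum>q\<in>pairs D k. cnj (u p) * W t0 p q * X q)
       + P * (\<Sum>p\<in>pairs D k. \<Sum>q\<in>pairs D k. cnj (u p) * dW p q * u q)"
    by (simp add: dexp sum_distrib_left sum.distrib algebra_simps del: dst.simps)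
  also have "\<dots> = (\<Sum>q\<in>pairs D k. cnj (u q) * X q)"
    by (subst sum.swap) (simp add: dz adj sum_distrib_right[symmetric])
  also have "\<dots> = (\<Sum>a<D. cnj (psi a) * dst D k W t0 psi chi N (a, zs)) * (\<Sum>w<k. cnj (chi w) * chi w)"
    unfolding pairs_def u_def X_def
    by (simp add: sum.cartesian_product case_prod_unfold sum_distrib_left sum_distrib_right mult_ac)
  also have "(\<Sum>w<k. cnj (chi w) * chi w) = 1"
  proof -
    have "(\<Sum>w<k. cnj (chi w) * chi w) = (\<Sum>w<k. complex_of_real ((cmod (chi w))\<^sup>2))"
      by (rule sum.cong[OF refl]) (simp only: complex_norm_square mult.commute)
    also have "\<dots> = 1" using chi_unit by (metis of_real_1 of_real_sum)
    finally show ?thesis .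
  qed
  finally show ?thesis by (simp add: N_def)
qed

lemma finite_cube[simp]: "finite (cube k m)"
proof -
  have "cube k m = {xs. set xs \<subseteq> {..<k} \<and> length xs = m}" by (auto simp: cube_def)
  then show ?thesis using finite_lists_length_eq[of "{..<k}" m] by simp
qed

lemma cube_Suc_sum: "(\<Sum>ws\<in>cube k (Suc r). g ws) = (\<Sum>ws\<in>cube k r. \<Sum>w<k. g (ws@[w]))"
proof -
  have img: "cube k (Suc r) = (\<lambda>(ws,w). ws@[w]) ` (cube k r \<times> {..<k})"
  proof
    show "cube k (Suc r) \<subseteq> (\<lambda>(ws,w). ws@[w]) ` (cube k r \<times> {..<k})"
    proof
      fix xs assume xs: "xs \<in> cube k (Suc r)"
      then obtain ys y where "xs = ys @ [y]" by (cases xs rule: rev_exhaust) (auto simp: cube_def)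
      with xs show "xs \<in> (\<lambda>(ws,w). ws@[w]) ` (cube k r \<times> {..<k})"
        by (auto simp: cube_def image_iff)
    qed
  qed (auto simp: cube_def)
  have inj: "inj_on (\<lambda>(ws,w). ws@[w]) (cube k r \<times> {..<k})"
    by (auto simp: inj_on_def)
  show ?thesis
    unfolding img sum.reindex[OF inj] by (simp add: sum.cartesian_product comp_def case_prod_unfold)
qed

definition Sfun where
  "Sfun D k W t0 psi chi r zs = (\<Sum>a<D. \<Sum>ws\<in>cube k r.
      cnj (psi a * prod_list (map chi ws)) * dst D k W t0 psi chi (length zs + r) (a, zs@ws))"

lemma S_step:
  fixes W :: "real \<Rightarrow> (nat \<times> nat) \<Rightarrow> (nat \<times> nat) \<Rightarrow> complex"
  assumes U: "unitary_mat D k (W t0)"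
    and fixed: "\<And>a i. a < D \<Longrightarrow> i < k \<Longrightarrow>
        (\<Sum>(b, c)\<in>pairs D k. W t0 (a, i) (b, c) * (psi b * chi c)) = psi a * chi i"
    and dW_zero: "(\<Sum>(a, i)\<in>pairs D k. \<Sum>(b, c)\<in>pairs D k.
        cnj (psi a * chi i) * vector_derivative (\<lambda>\<theta>. W \<theta> (a, i) (b, c)) (at t0)
        * (psi b * chi c)) = 0"
    and chi_unit: "(\<Sum>i<k. (cmod (chi i))\<^sup>2) = 1"
    and zs: "set zs \<subseteq> {..<k}"
  shows "Sfun D k W t0 psi chi (Suc r) zs = Sfun D k W t0 psi chi r zs"
proof -
  have "Sfun D k W t0 psi chi (Suc r) zs = (\<Sum>a<D. \<Sum>ws\<in>cube k r. \<Sum>w<k.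
      cnj (prod_list (map chi ws)) * (cnj (psi a * chi w) * dst D k W t0 psi chi (Suc (length (zs@ws))) (a, (zs@ws)@[w])))"
    unfolding Sfun_def cube_Suc_sum by (intro sum.cong refl) (auto simp: cube_def mult_ac simp del: dst.simps)
  also have "\<dots> = (\<Sum>ws\<in>cube k r. cnj (prod_list (map chi ws)) * (\<Sum>a<D. \<Sum>w<k.
      cnj (psi a * chi w) * dst D k W t0 psi chi (Suc (length (zs@ws))) (a, (zs@ws)@[w])))"
    by (subst sum.swap) (simp add: sum_distrib_left)
  also have "\<dots> = (\<Sum>ws\<in>cube k r. cnj (prod_list (map chi ws)) * (\<Sum>a<D.
      cnj (psi a) * dst D k W t0 psi chi (length (zs@ws)) (a, zs@ws)))"
  proof (rule sum.cong[OF refl])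
    fix ws assume "ws \<in> cube k r"
    then have "set (zs@ws) \<subseteq> {..<k}" using zs by (auto simp: cube_def)
    from keyK[OF U fixed dW_zero chi_unit this] show "cnj (prod_list (map chi ws)) * (\<Sum>a<D. \<Sum>w<k.
      cnj (psi a * chi w) * dst D k W t0 psi chi (Suc (length (zs@ws))) (a, (zs@ws)@[w])) =
      cnj (prod_list (map chi ws)) * (\<Sum>a<D.
      cnj (psi a) * dst D k W t0 psi chi (length (zs@ws)) (a, zs@ws))" by simp
  qed
  also have "\<dots> = Sfun D k W t0 psi chi r zs"
  proof -
    have "\<forall>ws\<in>cube k r. length ws = r" by (simp add: cube_def)
    then show ?thesis unfolding Sfun_def
      by (subst sum.swap) (auto simp: sum_distrib_left mult_ac intro!: sum.cong)
  qed
  finally show ?thesis .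
qed

lemma perm4b: "(\<Sum>a\<in>A. \<Sum>b\<in>B. \<Sum>c\<in>C. \<Sum>d\<in>E. f a b c d) = (\<Sum>d\<in>E. \<Sum>a\<in>A. \<Sum>b\<in>B. \<Sum>c\<in>C. f a b c d)"
proof -
  have "(\<Sum>a\<in>A. \<Sum>b\<in>B. \<Sum>c\<in>C. \<Sum>d\<in>E. f a b c d) = (\<Sum>a\<in>A. \<Sum>b\<in>B. \<Sum>d\<in>E. \<Sum>c\<in>C. f a b c d)"
    by (rule sum.cong[OF refl], rule sum.cong[OF refl], rule sum.swap)
  also have "\<dots> = (\<Sum>a\<in>A. \<Sum>d\<in>E. \<Sum>b\<in>B. \<Sum>c\<in>C. f a b c d)"
    by (rule sum.cong[OF refl], rule sum.swap)
  also have "\<dots> = (\<Sum>d\<in>E. \<Sum>a\<in>A. \<Sum>b\<in>B. \<Sum>c\<in>C. f a b c d)"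
    by (rule sum.swap)
  finally show ?thesis .
qed

lemma perm4c: "(\<Sum>a\<in>A. \<Sum>b\<in>B. \<Sum>c\<in>C. \<Sum>d\<in>E. f a b c d) = (\<Sum>c\<in>C. \<Sum>a\<in>A. \<Sum>b\<in>B. \<Sum>d\<in>E. f a b c d)"
proof -
  have "(\<Sum>a\<in>A. \<Sum>b\<in>B. \<Sum>c\<in>C. \<Sum>d\<in>E. f a b c d) = (\<Sum>a\<in>A. \<Sum>c\<in>C. \<Sum>b\<in>B. \<Sum>d\<in>E. f a b c d)"
    by (rule sum.cong[OF refl], rule sum.swap)
  also have "\<dots> = (\<Sum>c\<in>C. \<Sum>a\<in>A. \<Sum>b\<in>B. \<Sum>d\<in>E. f a b c d)"
    by (rule sum.swap)
  finally show ?thesis .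
qed

lemma swap4: "(\<Sum>a\<in>A. \<Sum>b\<in>B. \<Sum>c\<in>C. \<Sum>d\<in>E. f a b c d) = (\<Sum>c\<in>C. \<Sum>d\<in>E. \<Sum>a\<in>A. \<Sum>b\<in>B. f a b c d)"
proof -
  have "(\<Sum>a\<in>A. \<Sum>b\<in>B. \<Sum>c\<in>C. \<Sum>d\<in>E. f a b c d) = (\<Sum>a\<in>A. \<Sum>c\<in>C. \<Sum>d\<in>E. \<Sum>b\<in>B. f a b c d)"
    by (rule sum.cong[OF refl], subst sum.swap, rule sum.cong[OF refl], rule sum.swap)
  also have "\<dots> = (\<Sum>c\<in>C. \<Sum>d\<in>E. \<Sum>a\<in>A. \<Sum>b\<in>B. f a b c d)"
    by (subst sum.swap, rule sum.cong[OF refl], rule sum.swap)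
  finally show ?thesis .
qed

lemma S_all:
  fixes W :: "real \<Rightarrow> (nat \<times> nat) \<Rightarrow> (nat \<times> nat) \<Rightarrow> complex"
  assumes U: "unitary_mat D k (W t0)"
    and fixed: "\<And>a i. a < D \<Longrightarrow> i < k \<Longrightarrow>
        (\<Sum>(b, c)\<in>pairs D k. W t0 (a, i) (b, c) * (psi b * chi c)) = psi a * chi i"
    and dW_zero: "(\<Sum>(a, i)\<in>pairs D k. \<Sum>(b, c)\<in>pairs D k.
        cnj (psi a * chi i) * vector_derivative (\<lambda>\<theta>. W \<theta> (a, i) (b, c)) (at t0)
        * (psi b * chi c)) = 0"
    and chi_unit: "(\<Sum>i<k. (cmod (chi i))\<^sup>2) = 1"
    and zs: "set zs \<subseteq> {..<k}"
  shows "Sfun D k W t0 psi chi r zs = Sfun D k W t0 psi chi 0 zs"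
  by (induction r) (simp_all add: S_step[OF assms])

lemma dPsi_eq:
  assumes Wd: "\<And>p q. p \<in> pairs D k \<Longrightarrow> q \<in> pairs D k \<Longrightarrow> (\<lambda>\<theta>. W \<theta> p q) differentiable (at t0)"
    and "a < D" "set xs \<subseteq> {..<k}" "length xs = n"
  shows "dPsi D k W psi chi t0 n (a,xs) = dst D k W t0 psi chi n (a,xs)"
  unfolding dPsi_def Psi_def
  by (rule vector_derivative_at, rule dst_deriv[OF Wd]) (use assms in auto)

lemma Psi_eq:
  assumes fixed: "\<And>a i. a < D \<Longrightarrow> i < k \<Longrightarrow>
        (\<Sum>(b, c)\<in>pairs D k. W t0 (a, i) (b, c) * (psi b * chi c)) = psi a * chi i"
    and "a < D" "set xs \<subseteq> {..<k}" "length xs = n"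
  shows "Psi D k W psi chi t0 n (a,xs) = psi a * prod_list (map chi xs)"
  unfolding Psi_def using steps_fixed[OF fixed, of a xs n] assms by (simp add: init_pl)

theorem mainTheorem2:
  fixes D k n j :: nat
    and W :: "real \<Rightarrow> (nat \<times> nat) \<Rightarrow> (nat \<times> nat) \<Rightarrow> complex"
    and psi chi :: "nat \<Rightarrow> complex"
    and \<theta>0 :: real
    and e :: "nat \<Rightarrow> nat \<Rightarrow> complex"
  assumes D2: "D \<ge> 2" and k2: "k \<ge> 2"
    and chi_unit: "(\<Sum>i<k. (cmod (chi i))\<^sup>2) = 1"
    and psi_unit: "(\<Sum>a<D. (cmod (psi a))\<^sup>2) = 1"
    and W_unitary: "\<And>\<theta>. unitary_mat D k (W \<theta>)"
    and W_smooth: "\<And>p q. p \<in> pairs D k \<Longrightarrow> q \<in> pairs D k \<Longrightarrow> smooth_cfun (\<lambda>\<theta>. W \<theta> p q)"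
    and fixed: "\<And>a i. a < D \<Longrightarrow> i < k \<Longrightarrow>
        (\<Sum>(b, c)\<in>pairs D k. W \<theta>0 (a, i) (b, c) * (psi b * chi c)) = psi a * chi i"
    and dW_zero: "(\<Sum>(a, i)\<in>pairs D k. \<Sum>(b, c)\<in>pairs D k.
        cnj (psi a * chi i) * vector_derivative (\<lambda>\<theta>. W \<theta> (a, i) (b, c)) (at \<theta>0)
        * (psi b * chi c)) = 0"
    and j1: "1 \<le> j" and jn: "j \<le> n"
    and e_unit: "\<And>l. 1 \<le> l \<Longrightarrow> l < j \<Longrightarrow> (\<Sum>i<k. (cmod (e l i))\<^sup>2) = 1"
    and e_unbiased: "\<And>l. 1 \<le> l \<Longrightarrow> l < j \<Longrightarrow>
        (cmod (\<Sum>i<k. cnj (e l i) * chi i))\<^sup>2 = 1 / real k"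
  shows "\<forall>c<k. \<forall>c'<k. Mj D k W psi chi \<theta>0 e n j c c' = Mj D k W psi chi \<theta>0 e j j c c'"
  
proof -
  have Wd: "\<And>p q. p \<in> pairs D k \<Longrightarrow> q \<in> pairs D k \<Longrightarrow> (\<lambda>\<theta>. W \<theta> p q) differentiable (at \<theta>0)"
    using W_smooth unfolding smooth_cfun_def by (metis funpow_0)
  define pl where "pl = (\<lambda>xs. prod_list (map chi xs))"
  define F where "F = (\<Sum>us\<in>cube k (j-1). cnj (evec e us) * pl us)"
  define T where "T = (\<lambda>r c. \<Sum>vs\<in>cube k (j-1). cnj (evec e vs) * Sfun D k W \<theta>0 psi chi r (vs@[c]))"
  have form: "Mj D k W psi chi \<theta>0 e n' j c c' = F * chi c * cnj (T (n'-j) c') - cnj F * cnj (chi c') * T (n'-j) c"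
    if n': "j \<le> n'" and c: "c < k" and c': "c' < k" for n' c c'
  proof -
    define t1 where "t1 = (\<lambda>a ws us vs. (cnj (evec e us) * pl us) * chi c *
        (evec e vs * cnj (cnj (psi a * pl ws) * dst D k W \<theta>0 psi chi n' (a, (vs@[c'])@ws))))"
    define t2 where "t2 = (\<lambda>a ws us vs. cnj (cnj (evec e vs) * pl vs) * cnj (chi c') *
        (cnj (evec e us) * (cnj (psi a * pl ws) * dst D k W \<theta>0 psi chi n' (a, (us@[c])@ws))))"
    have Tn: "T (n'-j) c0 = (\<Sum>vs\<in>cube k (j-1). cnj (evec e vs) * (\<Sum>a<D. \<Sum>ws\<in>cube k (n'-j).
        cnj (psi a * pl ws) * dst D k W \<theta>0 psi chi n' (a, (vs@[c0])@ws)))" for c0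
      unfolding T_def Sfun_def pl_def
    proof (rule sum.cong[OF refl])
      fix vs assume "vs \<in> cube k (j-1)"
      then have "length (vs@[c0]) + (n'-j) = n'" using j1 n' by (auto simp: cube_def)
      then show "cnj (evec e vs) * (\<Sum>a<D. \<Sum>ws\<in>cube k (n'-j). cnj (psi a * prod_list (map chi ws)) * dst D k W \<theta>0 psi chi (length (vs@[c0]) + (n'-j)) (a, (vs@[c0])@ws))
        = cnj (evec e vs) * (\<Sum>a<D. \<Sum>ws\<in>cube k (n'-j). cnj (psi a * prod_list (map chi ws)) * dst D k W \<theta>0 psi chi n' (a, (vs@[c0])@ws))"
        by (simp only:)
    qed
    have "Mj D k W psi chi \<theta>0 e n' j c c' = (\<Sum>a<D. \<Sum>ws\<in>cube k (n'-j). \<Sum>us\<in>cube k (j-1). \<Sum>vs\<in>cube k (j-1).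
        t1 a ws us vs - t2 a ws us vs)"
      unfolding Mj_def ptrace_first_def partial_elem_def
    proof (simp only: case_prod_conv, intro sum.cong refl)
      fix a ws us vs assume a: "a \<in> {..<D}" and ws: "ws \<in> cube k (n'-j)" and us: "us \<in> cube k (j-1)" and vs: "vs \<in> cube k (j-1)"
      have l: "length (us @ c # ws) = n'" "length (vs @ c' # ws) = n'"
        using ws us vs n' that(1) j1 by (auto simp: cube_def)
      have s: "set (us @ c # ws) \<subseteq> {..<k}" "set (vs @ c' # ws) \<subseteq> {..<k}"
        using ws us vs c c' by (auto simp: cube_def)
      have a': "a < D" using a by simp
      note P1 = Psi_eq[where W=W and ?t0.0="\<theta>0", OF fixed a' s(1) l(1)] and P2 = Psi_eq[where W=W and ?t0.0="\<theta>0", OF fixed a' s(2) l(2)]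
      note d1 = dPsi_eq[OF Wd a' s(1) l(1)] and d2 = dPsi_eq[OF Wd a' s(2) l(2)]
      show "cnj (evec e us) * Mop D k W psi chi \<theta>0 n' (a, us @ c # ws) (a, vs @ c' # ws) * evec e vs =
          t1 a ws us vs - t2 a ws us vs"
        unfolding Mop_def t1_def t2_def pl_def
        by (simp add: P1 P2 d1 d2 algebra_simps)
    qed
    also have "\<dots> = (\<Sum>a<D. \<Sum>ws\<in>cube k (n'-j). \<Sum>us\<in>cube k (j-1). \<Sum>vs\<in>cube k (j-1). t1 a ws us vs)
       - (\<Sum>a<D. \<Sum>ws\<in>cube k (n'-j). \<Sum>us\<in>cube k (j-1). \<Sum>vs\<in>cube k (j-1). t2 a ws us vs)"
      by (simp only: sum_subtractf)
    also have "(\<Sum>a<D. \<Sum>ws\<in>cube k (n'-j). \<Sum>us\<in>cube k (j-1). \<Sum>vs\<in>cube k (j-1). t1 a ws us vs)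
        = F * chi c * cnj (T (n'-j) c')"
      by (subst perm4b) (simp add: Tn t1_def F_def sum_distrib_left sum_distrib_right)
    also have "(\<Sum>a<D. \<Sum>ws\<in>cube k (n'-j). \<Sum>us\<in>cube k (j-1). \<Sum>vs\<in>cube k (j-1). t2 a ws us vs)
        = cnj F * cnj (chi c') * T (n'-j) c"
      by (subst perm4c) (simp add: Tn t2_def F_def sum_distrib_left sum_distrib_right)
    finally show ?thesis .
  qed
  show ?thesis
  proof (intro allI impI)
    fix c c' assume c: "c < k" and c': "c' < k"
    have "\<And>c. c < k \<Longrightarrow> T (n-j) c = T (j-j) c"
      unfolding T_def
    proof (intro sum.cong refl arg_cong2[where f="(*)"] refl)
      fix c vs assume "c < k" "vs \<in> cube k (j-1)"
      then have "set (vs@[c]) \<subseteq> {..<k}" by (auto simp: cube_def)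
      from S_all[OF W_unitary fixed dW_zero chi_unit this]
      show "Sfun D k W \<theta>0 psi chi (n-j) (vs@[c]) = Sfun D k W \<theta>0 psi chi (j-j) (vs@[c])" by simp
    qed
    then show "Mj D k W psi chi \<theta>0 e n j c c' = Mj D k W psi chi \<theta>0 e j j c c'"
      using form[OF jn c c'] form[OF order_refl c c'] c c' by simp
  qed
qed
end
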